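(* Let $u$ be a harmonic function on $\mathbf D$ for which $C:=\sup\{u(z)\,(\log\frac{e}{1-|z|})^{-1}: z\in\mathbf D\}<\infty$. For every $\sigma>0$ there is $\tau_1=\tau_1(C,\sigma)>0$ such that: whenever $\theta\in[0,2\pi]$ and $r\in(0,1)$ satisfy $u(re^{i\theta})>\sigma\log\frac{e}{1-r}$, then $u(re^{i(\theta+\delta)})>\frac\sigma2\log\frac{e}{1-r}$ for all $|\delta|<\tau_1(1-r)$.
   Context: $\mathbf D$ is the open unit disc. *)

theory Defs
  imports "HOL-Analysis.Analysis"
begin

definition harmonic_on :: "complex set \<Rightarrow> (complex \<Rightarrow> real) \<Rightarrow> bool" where
  "harmonic_on S u \<longleftrightarrow> open S \<and>
     (\<exists>(Du :: complex \<Rightarrow> complex \<Rightarrow>\<^sub>L real) (D2u :: complex \<Rightarrow> complex \<Rightarrow>\<^sub>L (complex \<Rightarrow>\<^sub>L real)).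
        (\<forall>z\<in>S. (u has_derivative blinfun_apply (Du z)) (at z)) \<and>
        (\<forall>z\<in>S. (Du has_derivative blinfun_apply (D2u z)) (at z)) \<and>
        continuous_on S D2u \<and>
        (\<forall>z\<in>S. blinfun_apply (blinfun_apply (D2u z) 1) 1
               + blinfun_apply (blinfun_apply (D2u z) \<i>) \<i> = 0))"

end

theory Submission
  imports Defs "HOL-Complex_Analysis.Complex_Analysis"
begin


lemma deriv_line:
  fixes u :: "complex \<Rightarrow> real" and Du :: "complex \<Rightarrow> complex \<Rightarrow>\<^sub>L real"
  assumes "(u has_derivative blinfun_apply (Du (a + t *\<^sub>R H))) (at (a + t *\<^sub>R H))"
  shows "((\<lambda>t. u (a + t *\<^sub>R H)) has_real_derivative blinfun_apply (Du (a + t *\<^sub>R H)) H) (at t)"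
proof -
  have l: "((\<lambda>t. a + t *\<^sub>R H) has_derivative (\<lambda>t'. t' *\<^sub>R H)) (at t)"
    by (auto intro!: derivative_eq_intros)
  have "((\<lambda>t. u (a + t *\<^sub>R H)) has_derivative (\<lambda>t'. blinfun_apply (Du (a + t *\<^sub>R H)) (t' *\<^sub>R H))) (at t)"
    using has_derivative_compose[OF l assms] by (simp add: o_def)
  moreover have "(\<lambda>t'. blinfun_apply (Du (a + t *\<^sub>R H)) (t' *\<^sub>R H)) = (*) (blinfun_apply (Du (a + t *\<^sub>R H)) H)"
    by (auto simp: blinfun.scaleR_right)
  ultimately show ?thesis
    by (simp add: has_field_derivative_def)
qed

lemma one_sided:
  fixes u :: "complex \<Rightarrow> real" and Du :: "complex \<Rightarrow> complex \<Rightarrow>\<^sub>L real"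
    and D2 :: "complex \<Rightarrow> (complex \<Rightarrow>\<^sub>L real)"
  assumes lin: "bounded_linear D2"
    and du: "\<And>w. w \<in> ball z d \<Longrightarrow> (u has_derivative blinfun_apply (Du w)) (at w)"
    and est: "\<And>w. norm w < d \<Longrightarrow> norm (Du (z + w) - Du z - D2 w) \<le> e * norm w"
    and e: "e \<ge> 0"
    and HK: "norm H + norm K < d"
  shows "\<bar>u (z + H + K) - u (z + H) - u (z + K) + u z - blinfun_apply (D2 K) H\<bar>
          \<le> 2 * e * (norm H + norm K) * norm H"
proof -
  define g where "g t = u (z + K + t *\<^sub>R H) - u (z + t *\<^sub>R H) - t * blinfun_apply (D2 K) H" for t
  define g' where "g' t = blinfun_apply (Du (z + K + t *\<^sub>R H)) H - blinfun_apply (Du (z + t *\<^sub>R H)) H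
      - blinfun_apply (D2 K) H" for t
  have inb: "norm (t *\<^sub>R H) < d" "norm (K + t *\<^sub>R H) < d" if "0 \<le> t" "t \<le> 1" for t
  proof -
    have "norm (t *\<^sub>R H) \<le> norm H" using that by (simp add: mult_left_le_one_le)
    then show "norm (t *\<^sub>R H) < d" using HK by (smt (verit) norm_ge_zero)
    show "norm (K + t *\<^sub>R H) < d" using \<open>norm (t *\<^sub>R H) \<le> norm H\<close> HK norm_triangle_ineq[of K "t *\<^sub>R H"]
      by linarith
  qed
  have dz: "dist z (z + x) = norm x" for x by (simp add: dist_norm norm_minus_commute)
  have der: "(g has_real_derivative g' t) (at t)" if "0 \<le> t" "t \<le> 1" for t
  proof -
    have a: "z + K + t *\<^sub>R H \<in> ball z d" "z + t *\<^sub>R H \<in> ball z d"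
      using inb[OF that] dz[of "K + t *\<^sub>R H"] dz[of "t *\<^sub>R H"] by (auto simp: add.assoc)
    have 1: "((\<lambda>t. u (z + K + t *\<^sub>R H)) has_real_derivative blinfun_apply (Du (z + K + t *\<^sub>R H)) H) (at t)"
      by (rule deriv_line) (rule du[OF a(1)])
    have 2: "((\<lambda>t. u (z + t *\<^sub>R H)) has_real_derivative blinfun_apply (Du (z + t *\<^sub>R H)) H) (at t)"
      by (rule deriv_line) (rule du[OF a(2)])
    have 3: "((\<lambda>t. t * blinfun_apply (D2 K) H) has_real_derivative blinfun_apply (D2 K) H) (at t)"
      by (auto intro!: derivative_eq_intros)
    show ?thesis unfolding g_def g'_def
      by (rule DERIV_diff[OF DERIV_diff[OF 1 2] 3])
  qed
  obtain t where t: "0 < t" "t < 1" "g 1 - g 0 = (1 - 0) * g' t"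
    using MVT2[of 0 1 g g'] der by auto
  have bnd: "\<bar>g' t\<bar> \<le> 2 * e * (norm H + norm K) * norm H"
  proof -
    have lin2: "D2 (K + t *\<^sub>R H) = D2 K + D2 (t *\<^sub>R H)"
      using lin by (simp add: linear_add bounded_linear.linear)
    have eq: "g' t = blinfun_apply (Du (z + (K + t *\<^sub>R H)) - Du z - D2 (K + t *\<^sub>R H)) H
          - blinfun_apply (Du (z + t *\<^sub>R H) - Du z - D2 (t *\<^sub>R H)) H"
      unfolding g'_def lin2 by (simp add: blinfun.diff_left blinfun.add_left add.assoc)
    have t01: "0 \<le> t" "t \<le> 1" using t by auto
    have n1: "norm (blinfun_apply (Du (z + (K + t *\<^sub>R H)) - Du z - D2 (K + t *\<^sub>R H)) H)
         \<le> e * norm (K + t *\<^sub>R H) * norm H"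
      by (rule order_trans[OF norm_blinfun mult_right_mono[OF est[OF inb(2)[OF t01]] norm_ge_zero]])
    have n2: "norm (blinfun_apply (Du (z + t *\<^sub>R H) - Du z - D2 (t *\<^sub>R H)) H)
         \<le> e * norm (t *\<^sub>R H) * norm H"
      by (rule order_trans[OF norm_blinfun mult_right_mono[OF est[OF inb(1)[OF t01]] norm_ge_zero]])
    have m1: "norm (t *\<^sub>R H) \<le> norm H" using t by (simp add: mult_left_le_one_le)
    have m2: "norm (K + t *\<^sub>R H) \<le> norm H + norm K"
      using m1 norm_triangle_ineq[of K "t *\<^sub>R H"] by linarith
    have "e * norm (K + t *\<^sub>R H) * norm H \<le> e * (norm H + norm K) * norm H"
      by (intro mult_right_mono mult_left_mono m2 e) auto
    moreover have "e * norm (t *\<^sub>R H) * norm H \<le> e * (norm H + norm K) * norm H"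
      using m1 norm_ge_zero[of K] by (intro mult_right_mono mult_left_mono e) (linarith, auto)
    ultimately show ?thesis unfolding eq using n1 n2 unfolding real_norm_def
      by linarith
  qed
  have "u (z + H + K) - u (z + H) - u (z + K) + u z - blinfun_apply (D2 K) H = g 1 - g 0"
    unfolding g_def by (simp add: add_ac)
  then show ?thesis using t bnd by simp
qed

lemma sym_second:
  fixes u :: "complex \<Rightarrow> real" and Du :: "complex \<Rightarrow> complex \<Rightarrow>\<^sub>L real"
    and D2 :: "complex \<Rightarrow> (complex \<Rightarrow>\<^sub>L real)"
  assumes S: "open S" "z \<in> S"
    and du: "\<And>w. w \<in> S \<Longrightarrow> (u has_derivative blinfun_apply (Du w)) (at w)"
    and d2: "(Du has_derivative D2) (at z)"
  shows "blinfun_apply (D2 k) h = blinfun_apply (D2 h) k"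
proof -
  have lin: "bounded_linear D2" using d2 by (rule has_derivative_bounded_linear)
  have main: "\<bar>blinfun_apply (D2 k) h - blinfun_apply (D2 h) k\<bar> \<le> 2 * e * (norm h + norm k)^2"
    if e: "e > 0" for e
  proof -
    obtain d1 where d1: "d1 > 0" "\<And>y. norm (y - z) < d1 \<Longrightarrow> norm (Du y - Du z - D2 (y - z)) \<le> e * norm (y - z)"
      using d2 e unfolding has_derivative_at_alt by blast
    obtain d0 where d0: "d0 > 0" "ball z d0 \<subseteq> S" using S open_contains_ball by blast
    define d where "d = min d0 d1"
    have dpos: "d > 0" using d0 d1 by (simp add: d_def)
    have du': "\<And>w. w \<in> ball z d \<Longrightarrow> (u has_derivative blinfun_apply (Du w)) (at w)"
      using du d0 by (auto simp: d_def)
    have est: "\<And>w. norm w < d \<Longrightarrow> norm (Du (z + w) - Du z - D2 w) \<le> e * norm w"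
      using d1(2)[of "z + _"] by (auto simp: d_def)
    define s where "s = d / (2 * (norm h + norm k + 1))"
    have pos2: "2 * (norm h + norm k + 1) > 0" by (smt (verit) norm_ge_zero)
    have spos: "s > 0" using dpos pos2 unfolding s_def by (rule divide_pos_pos)
    have "s * (norm h + norm k) < d"
    proof -
      have "s * (norm h + norm k) \<le> s * (norm h + norm k + 1)" using spos by simp
      also have "\<dots> = d / 2" unfolding s_def using pos2 by (simp add: field_simps)
      finally show ?thesis using dpos by linarith
    qed
    then have HK: "norm (s *\<^sub>R h) + norm (s *\<^sub>R k) < d"
      "norm (s *\<^sub>R k) + norm (s *\<^sub>R h) < d" using spos by (simp_all add: algebra_simps)
    note o1 = one_sided[OF lin du' est less_imp_le[OF e] HK(1)]
    note o2 = one_sided[OF lin du' est less_imp_le[OF e] HK(2)]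
    have sc: "blinfun_apply (D2 (s *\<^sub>R a)) (s *\<^sub>R b) = s * s * blinfun_apply (D2 a) b" for a b
      using lin by (simp add: linear_scale bounded_linear.linear blinfun.scaleR_left blinfun.scaleR_right)
    have comm: "u (z + s *\<^sub>R k + s *\<^sub>R h) = u (z + s *\<^sub>R h + s *\<^sub>R k)" by (simp add: add_ac)
    have "s * s * \<bar>blinfun_apply (D2 k) h - blinfun_apply (D2 h) k\<bar>
        \<le> 2 * e * (norm (s *\<^sub>R h) + norm (s *\<^sub>R k)) * norm (s *\<^sub>R h)
         + 2 * e * (norm (s *\<^sub>R k) + norm (s *\<^sub>R h)) * norm (s *\<^sub>R k)"
    proof -
      have "s * s * \<bar>blinfun_apply (D2 k) h - blinfun_apply (D2 h) k\<bar>
           = \<bar>s * s * blinfun_apply (D2 k) h - s * s * blinfun_apply (D2 h) k\<bar>"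
        using spos by (subst right_diff_distrib[symmetric]) (simp add: abs_mult)
      then show ?thesis using o1 o2 unfolding sc comm abs_le_iff by linarith
    qed
    also have "\<dots> = s * s * (2 * e * (norm h + norm k)^2)"
      using spos by (simp add: power2_eq_square algebra_simps)
    finally show ?thesis using spos by simp
  qed
  show ?thesis
  proof (rule ccontr)
    assume ne: "blinfun_apply (D2 k) h \<noteq> blinfun_apply (D2 h) k"
    define a where "a = \<bar>blinfun_apply (D2 k) h - blinfun_apply (D2 h) k\<bar>"
    have apos: "a > 0" using ne by (simp add: a_def)
    define e where "e = a / (4 * ((norm h + norm k)^2 + 1))"
    have pos4: "4 * ((norm h + norm k)^2 + 1) > 0" by (smt (verit) zero_le_power2)
    have epos: "e > 0" using apos pos4 unfolding e_def by (rule divide_pos_pos)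
    have "a \<le> 2 * e * (norm h + norm k)^2" using main[OF epos] by (simp add: a_def)
    also have "\<dots> \<le> 2 * e * ((norm h + norm k)^2 + 1)" using epos by simp
    also have "\<dots> = a / 2" unfolding e_def using pos4 by (simp add: field_simps)
    finally show False using apos by linarith
  qed
qed



lemma cx_decomp: "h = Re h *\<^sub>R 1 + Im h *\<^sub>R \<i>"
  by (simp add: complex_eq_iff)

lemma blin_decomp: "blinfun_apply B h = Re h * blinfun_apply B 1 + Im h * blinfun_apply B \<i>"
  for B :: "complex \<Rightarrow>\<^sub>L real"
  by (subst cx_decomp) (simp add: blinfun.add_right blinfun.scaleR_right)

lemma harmonic_re:
  assumes "harmonic_on (ball 0 1) u"
  obtains f where "f holomorphic_on ball 0 1" "\<And>z. z \<in> ball 0 1 \<Longrightarrow> Re (f z) = u z"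
proof -
  let ?S = "ball (0::complex) 1"
  obtain Du :: "complex \<Rightarrow> complex \<Rightarrow>\<^sub>L real" and D2u :: "complex \<Rightarrow> complex \<Rightarrow>\<^sub>L (complex \<Rightarrow>\<^sub>L real)"
    where du: "\<And>z. z \<in> ?S \<Longrightarrow> (u has_derivative blinfun_apply (Du z)) (at z)"
      and d2: "\<And>z. z \<in> ?S \<Longrightarrow> (Du has_derivative blinfun_apply (D2u z)) (at z)"
      and lap: "\<And>z. z \<in> ?S \<Longrightarrow> blinfun_apply (blinfun_apply (D2u z) 1) 1
               + blinfun_apply (blinfun_apply (D2u z) \<i>) \<i> = 0"
    using assms unfolding harmonic_on_def by blast
  define g where "g z = complex_of_real (blinfun_apply (Du z) 1) - \<i> * complex_of_real (blinfun_apply (Du z) \<i>)" for z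
  have gder: "(g has_field_derivative
      (complex_of_real (blinfun_apply (blinfun_apply (D2u z) 1) 1) - \<i> * complex_of_real (blinfun_apply (blinfun_apply (D2u z) 1) \<i>))) (at z)"
    if z: "z \<in> ?S" for z
  proof -
    let ?D = "\<lambda>h. blinfun_apply (D2u z) h"
    have p: "((\<lambda>w. blinfun_apply (Du w) 1) has_derivative (\<lambda>h. blinfun_apply (?D h) 1)) (at z)"
      using bounded_linear.has_derivative[OF blinfun.bounded_linear_left d2[OF z]] .
    have q: "((\<lambda>w. blinfun_apply (Du w) \<i>) has_derivative (\<lambda>h. blinfun_apply (?D h) \<i>)) (at z)"
      using bounded_linear.has_derivative[OF blinfun.bounded_linear_left d2[OF z]] .
    have gd: "(g has_derivative (\<lambda>h. complex_of_real (blinfun_apply (?D h) 1) - \<i> * complex_of_real (blinfun_apply (?D h) \<i>))) (at z)"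
      unfolding g_def using d2[OF z] by (intro derivative_eq_intros p q) auto
    have sym: "blinfun_apply (?D \<i>) 1 = blinfun_apply (?D 1) \<i>"
      by (rule sym_second[OF open_ball z du d2[OF z]])
    have lin: "?D h = Re h *\<^sub>R ?D 1 + Im h *\<^sub>R ?D \<i>" for h
      by (subst cx_decomp) (simp add: blinfun.add_right blinfun.scaleR_right)
    have eq: "(\<lambda>h. complex_of_real (blinfun_apply (?D h) 1) - \<i> * complex_of_real (blinfun_apply (?D h) \<i>))
       = (*) (complex_of_real (blinfun_apply (?D 1) 1) - \<i> * complex_of_real (blinfun_apply (?D 1) \<i>))"
    proof
      fix h
      show "complex_of_real (blinfun_apply (?D h) 1) - \<i> * complex_of_real (blinfun_apply (?D h) \<i>)
        = (complex_of_real (blinfun_apply (?D 1) 1) - \<i> * complex_of_real (blinfun_apply (?D 1) \<i>)) * h"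
        using sym lap[OF z]
        by (subst (1 2) lin) (auto simp: complex_eq_iff blinfun.add_left blinfun.scaleR_left algebra_simps eq_neg_iff_add_eq_0[symmetric])
    qed
    show ?thesis using gd unfolding eq has_field_derivative_def .
  qed
  have gh: "g holomorphic_on ?S"
    unfolding holomorphic_on_open[OF open_ball] using gder by blast
  obtain F where F: "\<And>x. x \<in> ?S \<Longrightarrow> (F has_field_derivative g x) (at x within ?S)"
    using holomorphic_convex_primitive'[OF convex_ball open_ball gh] by blast
  have F': "(F has_field_derivative g x) (at x)" if "x \<in> ?S" for x
    using F[OF that] at_within_open[OF that open_ball] by simp
  have zero: "((\<lambda>z. Re (F z) - u z) has_derivative (\<lambda>h. 0)) (at x within ?S)" if x: "x \<in> ?S" for x
  proof -
    have "((\<lambda>z. Re (F z) - u z) has_derivative (\<lambda>h. Re (g x * h) - blinfun_apply (Du x) h)) (at x)"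
      using F'[OF x] du[OF x] unfolding has_field_derivative_def
      by (intro derivative_eq_intros) auto
    moreover have "(\<lambda>h. Re (g x * h) - blinfun_apply (Du x) h) = (\<lambda>h. 0)"
      by (rule ext, subst blin_decomp) (simp add: g_def algebra_simps)
    ultimately show ?thesis by (simp add: has_derivative_at_withinI)
  qed
  have cont: "continuous_on ?S (\<lambda>z. Re (F z) - u z)"
    using zero by (meson has_derivative_continuous_on)
  have "(\<lambda>z. Re (F z) - u z) constant_on ?S"
    by (rule has_derivative_zero_connected_constant_on[of ?S "{}"]) (use zero cont in auto)
  then obtain c where c: "\<And>z. z \<in> ?S \<Longrightarrow> Re (F z) - u z = c"
    unfolding constant_on_def by blast
  show ?thesis
  proof
    show "(\<lambda>z. F z - complex_of_real c) holomorphic_on ?S"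
      unfolding holomorphic_on_open[OF open_ball]
    proof
      fix x assume "x \<in> ?S"
      then have "((\<lambda>z. F z - complex_of_real c) has_field_derivative g x - 0) (at x)"
        by (intro DERIV_diff F' DERIV_const)
      then show "\<exists>f'. ((\<lambda>z. F z - complex_of_real c) has_field_derivative f') (at x)" by blast
    qed
    show "Re (F z - complex_of_real c) = u z" if "z \<in> ?S" for z
      using c[OF that] by simp
  qed
qed



lemma sq_norm_diff: "(norm (a + cnj b))^2 - (norm (a - b))^2 = 4 * Re a * Re b"
  unfolding cmod_power2 by (simp add: power2_eq_square algebra_simps)

lemma cayley_lt1:
  assumes "Re a > 0" "Re b > 0"
  shows "norm ((a - b) / (a + cnj b)) < 1"
proof -
  have "(norm (a - b))^2 < (norm (a + cnj b))^2"
    using sq_norm_diff[of a b] assms by (smt (verit) mult_pos_pos)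
  then have lt: "norm (a - b) < norm (a + cnj b)"
    using power2_less_imp_less norm_ge_zero by blast
  then show ?thesis by (simp add: norm_divide divide_less_eq)
qed

lemma cayley_ineq:
  fixes a b :: complex
  assumes a: "Re a > 0" and b: "Re b > 0" and d: "0 \<le> d" "d < 1"
    and n: "norm (a - b) \<le> d * norm (a + cnj b)"
  shows "Re a * (1 - d) \<le> Re b * (1 + d)"
proof (rule ccontr)
  assume "\<not> ?thesis"
  then have gt: "Re a - Re b > d * (Re a + Re b)" by (simp add: algebra_simps)
  have nn: "0 \<le> d * (Re a + Re b)" using a b d by simp
  have s1: "(d * (Re a + Re b))^2 < (Re a - Re b)^2"
    using gt nn by (simp add: power_strict_mono)
  have "(norm (a - b))^2 \<le> (d * norm (a + cnj b))^2"
    using n by (simp add: power_mono)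
  then have "(Re a - Re b)^2 + (Im a - Im b)^2 \<le> d^2 * ((Re a + Re b)^2 + (Im a - Im b)^2)"
    by (simp add: cmod_power2 power_mult_distrib)
  moreover have "d^2 * (Im a - Im b)^2 \<le> (Im a - Im b)^2"
    using d by (simp add: mult_left_le_one_le power_le_one)
  moreover have "(d * (Re a + Re b))^2 = d^2 * (Re a + Re b)^2" by (simp add: power_mult_distrib)
  ultimately show False using s1 by (simp add: distrib_left)
qed

lemma harnack:
  fixes f :: "complex \<Rightarrow> complex"
  assumes hol: "f holomorphic_on ball z0 R" and R: "R > 0"
    and bound: "\<And>w. w \<in> ball z0 R \<Longrightarrow> Re (f w) < M"
    and w: "norm (w - z0) < R"
  shows "(M - Re (f w)) * (1 - norm (w - z0) / R) \<le> (M - Re (f z0)) * (1 + norm (w - z0) / R)"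
proof -
  define G where "G x = complex_of_real M - f x" for x
  define g0 where "g0 = G z0"
  have Gpos: "Re (G x) > 0" if "x \<in> ball z0 R" for x
    using bound[OF that] by (simp add: G_def)
  have g0pos: "Re g0 > 0" using Gpos R by (simp add: g0_def)
  define \<psi> where "\<psi> \<zeta> = (G (z0 + of_real R * \<zeta>) - g0) / (G (z0 + of_real R * \<zeta>) + cnj g0)" for \<zeta>
  have inb: "z0 + of_real R * \<zeta> \<in> ball z0 R" if "norm \<zeta> < 1" for \<zeta>
    using that R by (simp add: dist_norm norm_mult)
  have Gh: "G holomorphic_on ball z0 R" unfolding G_def using hol by (intro holomorphic_intros)
  have hol\<psi>: "\<psi> holomorphic_on ball 0 1"
  proof -
    have lin: "(\<lambda>\<zeta>. z0 + of_real R * \<zeta>) holomorphic_on ball 0 1" by (intro holomorphic_intros)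
    have img: "(\<lambda>\<zeta>. z0 + of_real R * \<zeta>) ` ball 0 1 \<subseteq> ball z0 R" using inb by auto
    have c: "(\<lambda>\<zeta>. G (z0 + of_real R * \<zeta>)) holomorphic_on ball 0 1"
      using holomorphic_on_compose_gen[OF lin Gh img] by (simp add: o_def)
    have nz: "G (z0 + of_real R * \<zeta>) + cnj g0 \<noteq> 0" if "\<zeta> \<in> ball 0 1" for \<zeta>
    proof
      assume "G (z0 + of_real R * \<zeta>) + cnj g0 = 0"
      then have "Re (G (z0 + of_real R * \<zeta>) + cnj g0) = 0" by simp
      then have "Re (G (z0 + of_real R * \<zeta>)) + Re g0 = 0" by simp
      then show False using Gpos[OF inb] g0pos that by (smt (verit) mem_ball_0)
    qed
    show ?thesis unfolding \<psi>_def using c nz by (intro holomorphic_intros) auto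
  qed
  have \<psi>0: "\<psi> 0 = 0" by (simp add: \<psi>_def g0_def)
  have \<psi>lt: "norm (\<psi> \<zeta>) < 1" if "norm \<zeta> < 1" for \<zeta>
    unfolding \<psi>_def by (rule cayley_lt1[OF Gpos[OF inb[OF that]] g0pos])
  define \<zeta> where "\<zeta> = (w - z0) / of_real R"
  have \<zeta>: "norm \<zeta> < 1" using w R by (simp add: \<zeta>_def norm_divide divide_less_eq)
  have wz: "z0 + of_real R * \<zeta> = w" using R by (simp add: \<zeta>_def)
  have sch: "norm (\<psi> \<zeta>) \<le> norm \<zeta>"
    using Schwarz_Lemma(1)[OF hol\<psi> \<psi>0 \<psi>lt \<zeta>] by blast
  define d where "d = norm (w - z0) / R"
  have nd: "norm \<zeta> = d" using R by (simp add: \<zeta>_def d_def norm_divide)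
  have wb: "w \<in> ball z0 R" using w by (simp add: dist_norm norm_minus_commute)
  have den: "G w + cnj g0 \<noteq> 0"
  proof
    assume "G w + cnj g0 = 0"
    then have "Re (G w + cnj g0) = 0" by simp
    then have "Re (G w) + Re g0 = 0" by simp
    then show False using Gpos[OF wb] g0pos by linarith
  qed
  have "norm (G w - g0) \<le> d * norm (G w + cnj g0)"
    using sch den unfolding \<psi>_def wz nd by (simp add: norm_divide divide_le_eq)
  from cayley_ineq[OF Gpos[OF wb] g0pos _ _ this]
  have "Re (G w) * (1 - d) \<le> Re g0 * (1 + d)" using w R by (simp add: d_def)
  then show ?thesis by (simp add: G_def g0_def d_def)
qed



lemma cis_lip: "norm (cis a - cis b) \<le> \<bar>a - b\<bar>"
proof -
  have "norm (cis a - cis b) \<le> 1 * norm (a - b)"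
  proof (rule differentiable_bound[of UNIV cis "\<lambda>x t. t *\<^sub>R (\<i> * cis x)"])
    show "(cis has_derivative (\<lambda>t. t *\<^sub>R (\<i> * cis x))) (at x within UNIV)" for x
      using has_derivative_cis[of "\<lambda>x. x" "\<lambda>x. x" x UNIV] by (simp add: has_derivative_ident)
    show "onorm (\<lambda>t. t *\<^sub>R (\<i> * cis x)) \<le> 1" for x
      by (rule onorm_bound) (auto simp: norm_mult)
  qed auto
  then show ?thesis by simp
qed

lemma ln_L: "0 < (x::real) \<Longrightarrow> ln (exp 1 / x) = 1 - ln x"
  using ln_div[of "exp 1" x] by simp

theorem lemma7:
  fixes C \<sigma> :: real
  assumes "\<sigma> > 0"
  shows "\<exists>\<tau>\<^sub>1 > 0. \<forall>u :: complex \<Rightarrow> real.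
     harmonic_on (ball 0 1) u
     \<and> bdd_above {u z / ln (exp 1 / (1 - norm z)) | z. z \<in> ball 0 1}
     \<and> Sup {u z / ln (exp 1 / (1 - norm z)) | z. z \<in> ball 0 1} = C
     \<longrightarrow> (\<forall>\<theta> \<in> {0..2*pi}. \<forall>r \<in> {0<..<1}.
           u (complex_of_real r * cis \<theta>) > \<sigma> * ln (exp 1 / (1 - r))
           \<longrightarrow> (\<forall>\<delta>::real. \<bar>\<delta>\<bar> < \<tau>\<^sub>1 * (1 - r)
                 \<longrightarrow> u (complex_of_real r * cis (\<theta> + \<delta>)) > \<sigma> / 2 * ln (exp 1 / (1 - r))))"
proof -
  define A where "A = \<bar>C\<bar> * ln 2 + 1 + \<bar>C\<bar>"
  have Apos: "A > 0" unfolding A_def by (smt (verit) ln_ge_zero mult_nonneg_nonneg abs_ge_zero)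
  define \<tau> where "\<tau> = min (1/4) (\<sigma> / (16 * A))"
  have \<tau>pos: "\<tau> > 0" using Apos assms by (simp add: \<tau>_def)
  show ?thesis
  proof (intro exI[of _ \<tau>] conjI \<tau>pos allI impI ballI)
    fix u :: "complex \<Rightarrow> real" and \<theta> r \<delta> :: real
    assume H: "harmonic_on (ball 0 1) u
     \<and> bdd_above {u z / ln (exp 1 / (1 - norm z)) | z. z \<in> ball 0 1}
     \<and> Sup {u z / ln (exp 1 / (1 - norm z)) | z. z \<in> ball 0 1} = C"
      and r: "r \<in> {0<..<1}"
      and big: "u (complex_of_real r * cis \<theta>) > \<sigma> * ln (exp 1 / (1 - r))"
      and \<delta>: "\<bar>\<delta>\<bar> < \<tau> * (1 - r)"
    define L where "L = ln (exp 1 / (1 - r))"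
    have L: "L = 1 - ln (1 - r)" using r by (simp add: L_def ln_L)
    have L1: "L \<ge> 1" using r unfolding L by simp
    have upper: "u z \<le> C * ln (exp 1 / (1 - norm z))" if z: "z \<in> ball 0 1" for z
    proof -
      have "u z / ln (exp 1 / (1 - norm z)) \<le> C"
        using H z by (auto intro!: cSup_upper)
      moreover have "ln (exp 1 / (1 - norm z)) > 0"
        using z by (simp add: ln_L) (smt (verit) ln_le_zero_iff norm_ge_zero)
      ultimately show ?thesis by (simp add: divide_le_eq mult.commute)
    qed
    define z0 where "z0 = complex_of_real r * cis \<theta>"
    have nz0: "norm z0 = r" using r by (simp add: z0_def norm_mult)
    have z0b: "z0 \<in> ball 0 1" using nz0 r by simp
    have u0: "u z0 > \<sigma> * L" using big by (simp add: z0_def L_def)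
    have "C * L \<ge> u z0" using upper[OF z0b] by (simp add: nz0 L_def)
    then have CL: "C > \<sigma>" using u0 L1 by (smt (verit) mult_right_mono)
    then have Cpos: "C > 0" using assms by simp
    obtain f where fh: "f holomorphic_on ball 0 1" and fu: "\<And>z. z \<in> ball 0 1 \<Longrightarrow> Re (f z) = u z"
      using harmonic_re[OF conjunct1[OF H]] by blast
    define R where "R = (1 - r) / 2"
    have Rpos: "R > 0" using r by (simp add: R_def)
    have sub: "ball z0 R \<subseteq> ball 0 1"
    proof
      fix x assume "x \<in> ball z0 R"
      then have "norm (x - z0) < R" by (simp add: dist_norm norm_minus_commute)
      then have "norm x < r + R" using nz0 norm_triangle_ineq2[of x z0] by linarith
      moreover have "r + R < 1" using r unfolding R_def by (auto simp: field_simps)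
      ultimately show "x \<in> ball 0 1" by simp
    qed
    define M where "M = C * (L + ln 2) + 1"
    have bound: "Re (f x) < M" if x: "x \<in> ball z0 R" for x
    proof -
      have xb: "x \<in> ball 0 1" using sub x by blast
      have "norm (x - z0) < R" using x by (simp add: dist_norm norm_minus_commute)
      then have nx: "norm x < r + R" using nz0 norm_triangle_ineq2[of x z0] by linarith
      have pos: "0 < (1 - r) / 2" using r by simp
      have lt: "(1 - r) / 2 < 1 - norm x" using nx unfolding R_def by (simp add: field_simps)
      have "ln (exp 1 / (1 - norm x)) = 1 - ln (1 - norm x)"
        using xb by (simp add: ln_L)
      also have "\<dots> \<le> 1 - ln ((1 - r) / 2)"
        using lt pos by simp
      also have "\<dots> = L + ln 2" using r by (simp add: L ln_div)
      finally have "ln (exp 1 / (1 - norm x)) \<le> L + ln 2" .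
      then have "u x \<le> C * (L + ln 2)"
        using upper[OF xb] Cpos by (smt (verit) mult_left_mono)
      then show ?thesis using fu[OF xb] by (simp add: M_def)
    qed
    define w where "w = complex_of_real r * cis (\<theta> + \<delta>)"
    have "norm (w - z0) = r * norm (cis (\<theta> + \<delta>) - cis \<theta>)"
      using r by (simp add: w_def z0_def right_diff_distrib[symmetric] norm_mult)
    also have "\<dots> \<le> 1 * \<bar>\<delta>\<bar>"
      using cis_lip[of "\<theta> + \<delta>" \<theta>] r by (intro mult_mono) auto
    finally have wz: "norm (w - z0) \<le> \<bar>\<delta>\<bar>" by simp
    define d where "d = norm (w - z0) / R"
    have d0: "d \<ge> 0" using Rpos by (simp add: d_def)
    have "norm (w - z0) < 2 * \<tau> * R" using wz \<delta> by (simp add: R_def)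
    then have d2: "d < 2 * \<tau>" using Rpos by (simp add: d_def divide_less_eq mult.commute)
    have t1: "\<tau> \<le> 1/4" and t2: "\<tau> \<le> \<sigma> / (16 * A)" by (simp_all add: \<tau>_def)
    have dhalf: "d \<le> 1/2" using d2 t1 by linarith
    have "d < \<sigma> / (8 * A)" using d2 t2 by simp
    then have dA: "d * (8 * A) \<le> \<sigma>" using Apos by (simp add: less_divide_eq)
    have wR: "norm (w - z0) < R" using d2 dhalf Rpos
      by (simp add: d_def divide_less_eq)
    have harn: "(M - Re (f w)) * (1 - d) \<le> (M - Re (f z0)) * (1 + d)"
      using harnack[OF holomorphic_on_subset[OF fh sub] Rpos bound wR] by (simp add: d_def)
    have wR': "w \<in> ball z0 R" using wR by (simp add: dist_norm norm_minus_commute)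
    have wb: "w \<in> ball 0 1" using sub wR' by blast
    have z0R: "z0 \<in> ball z0 R" using Rpos by simp
    have Mu0: "M - u z0 > 0" using bound[OF z0R] fu[OF z0b] by simp
    have Mu0': "M - u z0 \<le> A * L"
    proof -
      have "M - u z0 \<le> C * L + C * ln 2 + 1 - \<sigma> * L" using u0 by (simp add: M_def algebra_simps)
      also have "\<dots> \<le> C * L + C * ln 2 + 1" using assms L1 by simp
      also have "\<dots> \<le> A * L"
      proof -
        have c0: "0 \<le> C * ln 2" using Cpos by simp
        have "C * ln 2 * 1 \<le> C * ln 2 * L" using mult_left_mono[OF L1 c0] .
        moreover have "A * L = C * ln 2 * L + L + C * L" using Cpos by (simp add: A_def algebra_simps)
        ultimately show ?thesis using L1 by linarith
      qed
      finally show ?thesis .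
    qed
    have key: "M - u w \<le> (M - u z0) * (1 + 4 * d)"
    proof -
      have "(M - u z0) * (1 + d) \<le> (M - u z0) * ((1 + 4 * d) * (1 - d))"
        using Mu0 d0 dhalf by (intro mult_left_mono) (auto simp: algebra_simps power2_eq_square
            intro: mult_right_mono[of d "1/2" d, simplified])
      then have "(M - u w) * (1 - d) \<le> ((M - u z0) * (1 + 4 * d)) * (1 - d)"
        using harn fu[OF wb] fu[OF z0b] by (simp add: mult.assoc)
      then show ?thesis using dhalf by (simp add: mult_le_cancel_right)
    qed
    have "4 * d * (M - u z0) \<le> 4 * d * (A * L)" using Mu0' d0 by (intro mult_left_mono) auto
    also have "\<dots> = (d * (8 * A)) * L / 2" by simp
    also have "\<dots> \<le> \<sigma> * L / 2" by (intro divide_right_mono mult_right_mono dA) (use L1 in auto)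
    finally have "4 * d * (M - u z0) \<le> \<sigma> * L / 2" .
    then have "u w > \<sigma> / 2 * L" using key u0 by (simp add: algebra_simps)
    then show "u (complex_of_real r * cis (\<theta> + \<delta>)) > \<sigma> / 2 * ln (exp 1 / (1 - r))"
      by (simp add: w_def L_def)
  qed
qed


end
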